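(* For given cardinality vectors $\boldsymbol\varrho,\boldsymbol\varphi,\boldsymbol\psi$ and any receiver $i$ with $\psi_i\ge1$, the expected primary degree $\Delta_i$ of any vertex induced by receiver $i$ equals \[ \mathbb E[\Delta_i]=\sum_{k=1,k\ne i}^M\frac{\psi_k}{N}\Big(1+\frac{\varrho_k\varrho_i}{N-1}\Big). \]
   Context: A sender holds a frame $\mathcal N$ of $N\ge2$ packets and serves receivers $\mathcal M=\{1,\dots,M\}$. For each receiver $i$ there are sets $\mathcal H_i\subseteq\mathcal N$ (Has set), $\mathcal L_i=\mathcal N\setminus\mathcal H_i$ (Lacks set) and $\mathcal W_i\subseteq\mathcal L_i$ (Wants set), with cardinalities $\varrho_i=|\mathcal H_i|$, $\varphi_i=N-\varrho_i$, $\psi_i=|\mathcal W_i|$. The primary IDNC graph $\mathcal G_\rho$ has a vertex $v_{ij}$ for every receiver $i$ and every $j\in\mathcal W_i$; two distinct vertices $v_{ij},v_{kl}$ are adjacent iff (C1) $j=l$, or (C2) $j\in\mathcal H_k$ and $l\in\mathcal H_i$. The primary degree of a vertex is its degree in $\mathcal G_\rho$. Expectations are taken in the model that ignores set contents: given the cardinalities, the pairs $(\mathcal H_k,\mathcal W_k)$, $k\in\mathcal M$, are independent, $\mathcal H_k$ is a uniformly random $\varrho_k$-element subset of $\mathcal N$, and given $\mathcal H_k$, $\mathcal W_k$ is a uniformly random $\psi_k$-element subset of $\mathcal N\setminus\mathcal H_k$. The expected primary degree of a vertex induced by receiver $i$ means the expected degree of $v_{ij}$ conditioned on $j\in\mathcal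 W_i$, for a fixed packet $j$. *)

theory Defs
  imports "HOL-Probability.Probability"
begin

text \<open>Packets are \<open>{1..N}\<close>, receivers are \<open>{1..M}\<close>. A configuration assigns to every
receiver k the pair (Has set, Wants set) = (H k, W k).\<close>

type_synonym config = "nat \<Rightarrow> nat set \<times> nat set"

definition Has :: "config \<Rightarrow> nat \<Rightarrow> nat set" where
  "Has c k = fst (c k)"

definition Wants :: "config \<Rightarrow> nat \<Rightarrow> nat set" where
  "Wants c k = snd (c k)"

definition idnc_vertices :: "nat \<Rightarrow> config \<Rightarrow> (nat \<times> nat) set" where
  "idnc_vertices M c = {(k, l). k \<in> {1..M} \<and> l \<in> Wants c k}"

definition idnc_adj :: "config \<Rightarrow> nat \<times> nat \<Rightarrow> nat \<times> nat \<Rightarrow> bool" where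
  "idnc_adj c v u \<longleftrightarrow> v \<noteq> u \<and>
     (snd v = snd u \<or> (snd v \<in> Has c (fst u) \<and> snd u \<in> Has c (fst v)))"

definition primary_degree :: "nat \<Rightarrow> config \<Rightarrow> nat \<times> nat \<Rightarrow> nat" where
  "primary_degree M c v = card {u \<in> idnc_vertices M c. idnc_adj c v u}"

definition receiver_pmf :: "nat \<Rightarrow> nat \<Rightarrow> nat \<Rightarrow> (nat set \<times> nat set) pmf" where
  "receiver_pmf N rho psi =
     bind_pmf (pmf_of_set {H. H \<subseteq> {1..N} \<and> card H = rho})
       (\<lambda>H. map_pmf (\<lambda>W. (H, W)) (pmf_of_set {W. W \<subseteq> {1..N} - H \<and> card W = psi}))"

definition config_pmf :: "nat \<Rightarrow> nat \<Rightarrow> (nat \<Rightarrow> nat) \<Rightarrow> (nat \<Rightarrow> nat) \<Rightarrow> config pmf" where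
  "config_pmf N M rho psi = Pi_pmf {1..M} ({}, {}) (\<lambda>k. receiver_pmf N (rho k) (psi k))"

definition expected_primary_degree ::
  "nat \<Rightarrow> nat \<Rightarrow> (nat \<Rightarrow> nat) \<Rightarrow> (nat \<Rightarrow> nat) \<Rightarrow> nat \<Rightarrow> nat \<Rightarrow> real" where
  "expected_primary_degree N M rho psi i j =
     measure_pmf.expectation (cond_pmf (config_pmf N M rho psi) {c. j \<in> Wants c i})
       (\<lambda>c. real (primary_degree M c (i, j)))"

end

theory Submission
  imports Defs
begin


lemma cnt_mem:
  assumes "finite A" "x \<in> A" "0 < k"
  shows "card {S. S \<subseteq> A \<and> card S = k \<and> x \<in> S} = (card A - 1) choose (k - 1)"
proof -
  have "{S. S \<subseteq> A \<and> card S = k \<and> x \<in> S} = insert x ` {S. S \<subseteq> A - {x} \<and> card S = k - 1}"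
  proof (intro equalityI subsetI)
    fix S assume S: "S \<in> {S. S \<subseteq> A \<and> card S = k \<and> x \<in> S}"
    then have fS: "finite S" using assms(1) finite_subset by blast
    have "S = insert x (S - {x})" using S by auto
    moreover have "card (S - {x}) = k - 1" using S fS by (simp add: card_Diff_singleton)
    ultimately show "S \<in> insert x ` {S. S \<subseteq> A - {x} \<and> card S = k - 1}" using S by blast
  next
    fix S assume "S \<in> insert x ` {S. S \<subseteq> A - {x} \<and> card S = k - 1}"
    then obtain T where T: "T \<subseteq> A - {x}" "card T = k - 1" "S = insert x T" by blast
    have "finite T" using T(1) assms(1) finite_subset by blast
    have "x \<notin> T" using T(1) by auto
    then have "card S = k" using T assms(3) \<open>finite T\<close> by simp
    then show "S \<in> {S. S \<subseteq> A \<and> card S = k \<and> x \<in> S}" using T assms(2) by auto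
  qed
  moreover have "inj_on (insert x) {S. S \<subseteq> A - {x} \<and> card S = k - 1}"
    by (rule inj_onI) auto
  ultimately have "card {S. S \<subseteq> A \<and> card S = k \<and> x \<in> S} = card {S. S \<subseteq> A - {x} \<and> card S = k - 1}"
    by (simp add: card_image)
  also have "\<dots> = card (A - {x}) choose (k - 1)" using assms(1) by (simp add: n_subsets)
  finally show ?thesis using assms by simp
qed

lemma subsets_ne:
  assumes "finite A" "k \<le> card A"
  shows "{S. S \<subseteq> A \<and> card S = k} \<noteq> {}" "finite {S. S \<subseteq> A \<and> card S = k}"
proof -
  have "card {S. S \<subseteq> A \<and> card S = k} = card A choose k" using assms(1) by (simp add: n_subsets)
  then have "card {S. S \<subseteq> A \<and> card S = k} > 0" using assms(2) by simp
  then show "{S. S \<subseteq> A \<and> card S = k} \<noteq> {}" "finite {S. S \<subseteq> A \<and> card S = k}"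
    using card_gt_0_iff by blast+
qed

lemma prob_mem:
  assumes "finite A" "x \<in> A" "k \<le> card A"
  shows "measure (pmf_of_set {S. S \<subseteq> A \<and> card S = k}) {S. x \<in> S} = real k / real (card A)"
proof -
  note ne = subsets_ne[OF assms(1,3)]
  have "measure (pmf_of_set {S. S \<subseteq> A \<and> card S = k}) {S. x \<in> S}
      = real (card {S. S \<subseteq> A \<and> card S = k \<and> x \<in> S}) / real (card A choose k)"
    using ne assms(1) by (simp add: measure_pmf_of_set n_subsets Int_def conj_assoc)
  also have "\<dots> = real k / real (card A)"
  proof (cases "k = 0")
    case True
    have E: "{S. S \<subseteq> A \<and> card S = k \<and> x \<in> S} = {}"
    proof (rule equals0I)
      fix S assume "S \<in> {S. S \<subseteq> A \<and> card S = k \<and> x \<in> S}"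
      then have "finite S" "card S = 0" "x \<in> S" using assms(1) True finite_subset by auto
      then show False by simp
    qed
    show ?thesis unfolding E using True by simp
  next
    case False
    have eq: "k * (card A choose k) = card A * ((card A - 1) choose (k - 1))"
      using False times_binomial_minus1_eq by blast
    have pos: "card A > 0" using assms card_gt_0_iff by blast
    have pos2: "(card A choose k) > 0" using assms(3) by simp
    have "real k * real (card A choose k) = real (card A) * real ((card A - 1) choose (k - 1))"
      using eq by (metis of_nat_mult)
    then show ?thesis using cnt_mem[OF assms(1,2)] False pos pos2
      by (simp add: field_simps)
  qed
  finally show ?thesis .
qed

lemma recv_measure:
  assumes "rho \<le> N" "psi \<le> N - rho"
  shows "measure (receiver_pmf N rho psi) X =
    (\<Sum>H\<in>{H. H \<subseteq> {1..N} \<and> card H = rho}.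
        measure (pmf_of_set {W. W \<subseteq> {1..N} - H \<and> card W = psi}) {W. (H, W) \<in> X})
      / real (card {H. H \<subseteq> {1..N} \<and> card H = rho})"
proof -
  let ?HS = "{H. H \<subseteq> {1..N} \<and> card H = rho}"
  let ?WS = "\<lambda>H. {W. W \<subseteq> {1..N} - H \<and> card W = psi}"
  have HS: "?HS \<noteq> {}" "finite ?HS" using subsets_ne[of "{1..N}" rho] assms by auto
  have WS: "?WS H \<noteq> {}" "finite (?WS H)" if "H \<in> ?HS" for H
  proof -
    have "card ({1..N} - H) = N - rho" using that by (auto simp: card_Diff_subset finite_subset)
    then show "?WS H \<noteq> {}" "finite (?WS H)" using subsets_ne[of "{1..N} - H" psi] assms by auto
  qed
  have "measure (receiver_pmf N rho psi) X = measure_pmf.expectation (receiver_pmf N rho psi) (indicator X)"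
    by simp
  also have "\<dots> = (\<Sum>H\<in>?HS. measure_pmf.expectation (map_pmf (\<lambda>W. (H, W)) (pmf_of_set (?WS H))) (indicator X)
       /\<^sub>R real (card ?HS))"
    unfolding receiver_pmf_def
    by (rule pmf_expectation_bind_pmf_of_set) (use HS WS in auto)
  also have "\<dots> = (\<Sum>H\<in>?HS. measure (pmf_of_set (?WS H)) {W. (H, W) \<in> X} / real (card ?HS))"
  proof (rule sum.cong[OF refl])
    fix H assume "H \<in> ?HS"
    have "measure_pmf.expectation (map_pmf (\<lambda>W. (H, W)) (pmf_of_set (?WS H))) (indicator X)
        = measure (map_pmf (\<lambda>W. (H, W)) (pmf_of_set (?WS H))) X" by simp
    also have "\<dots> = measure (pmf_of_set (?WS H)) {W. (H, W) \<in> X}"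
      by (simp add: vimage_def)
    finally show "measure_pmf.expectation (map_pmf (\<lambda>W. (H, W)) (pmf_of_set (?WS H))) (indicator X) /\<^sub>R real (card ?HS)
        = measure (pmf_of_set (?WS H)) {W. (H, W) \<in> X} / real (card ?HS)"
      by (simp add: divide_inverse_commute)
  qed
  also have "\<dots> = (\<Sum>H\<in>?HS. measure (pmf_of_set (?WS H)) {W. (H, W) \<in> X}) / real (card ?HS)"
    by (simp add: sum_divide_distrib)
  finally show ?thesis .
qed

lemma inner_mem:
  assumes "H \<subseteq> {1..N}" "card H = rho" "psi \<le> N - rho" "a \<in> {1..N}"
  shows "measure (pmf_of_set {W. W \<subseteq> {1..N} - H \<and> card W = psi}) {W. a \<in> W}
     = (if a \<notin> H then real psi / real (N - rho) else 0)"
proof -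
  have cd: "card ({1..N} - H) = N - rho" using assms by (auto simp: card_Diff_subset finite_subset)
  have ne: "{W. W \<subseteq> {1..N} - H \<and> card W = psi} \<noteq> {}" "finite {W. W \<subseteq> {1..N} - H \<and> card W = psi}"
    using subsets_ne[of "{1..N} - H" psi] cd assms by auto
  show ?thesis
  proof (cases "a \<in> H")
    case True
    then have "{W. W \<subseteq> {1..N} - H \<and> card W = psi} \<inter> {W. a \<in> W} = {}" by auto
    then show ?thesis using ne True by (simp add: measure_pmf_of_set)
  next
    case False
    then show ?thesis using prob_mem[of "{1..N} - H" a psi] cd assms by simp
  qed
qed



lemma R1:
  assumes "rho \<le> N" "psi \<le> N - rho" "a \<in> {1..N}"
  shows "measure (receiver_pmf N rho psi) {x. a \<in> snd x} = real psi / real N"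
proof -
  let ?HS = "{H. H \<subseteq> {1..N} \<and> card H = rho}"
  have N0: "N > 0" using assms by auto
  have "(\<Sum>H\<in>?HS. measure (pmf_of_set {W. W \<subseteq> {1..N} - H \<and> card W = psi}) {W. (H, W) \<in> {x. a \<in> snd x}})
      = (\<Sum>H\<in>?HS. (if a \<notin> H then real psi / real (N - rho) else 0))"
    by (rule sum.cong[OF refl]) (use inner_mem assms in auto)
  also have "\<dots> = real psi / real (N - rho) * real (card {H \<in> ?HS. a \<notin> H})"
    by (simp add: sum.If_cases Int_def)
  also have "{H \<in> ?HS. a \<notin> H} = {H. H \<subseteq> {1..N} - {a} \<and> card H = rho}" by auto
  also have "card \<dots> = (N - 1) choose rho" using assms(3) by (simp add: n_subsets)
  finally have S: "(\<Sum>H\<in>?HS. measure (pmf_of_set {W. W \<subseteq> {1..N} - H \<and> card W = psi}) {W. (H, W) \<in> {x. a \<in> snd x}})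
      = real psi / real (N - rho) * real ((N - 1) choose rho)" .
  have cHS: "card ?HS = N choose rho" by (simp add: n_subsets)
  have pos: "(N choose rho) > 0" using assms by simp
  show ?thesis
  proof (cases "rho = N")
    case True
    then have "psi = 0" using assms by simp
    then show ?thesis using recv_measure[OF assms(1,2), of "{x. a \<in> snd x}"] S by simp
  next
    case False
    have e: "(N - rho) * (N choose rho) = N * ((N - 1) choose rho)" by (rule binomial_absorb_comp)
    have e': "real (N - rho) * real (N choose rho) = real N * real ((N - 1) choose rho)"
      using e by (metis of_nat_mult)
    have np: "real (N - rho) > 0" using False assms by simp
    have D: "real ((N - 1) choose rho) > 0" using False assms by simp
    have "measure (receiver_pmf N rho psi) {x. a \<in> snd x}
       = real psi / real (N - rho) * real ((N - 1) choose rho) / real (N choose rho)"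
      using recv_measure[OF assms(1,2), of "{x. a \<in> snd x}"] S cHS by simp
    also have "\<dots> = real psi / real N"
      using np D pos N0 e' by (simp add: divide_simps)
    finally show ?thesis .
  qed
qed



lemma R2:
  assumes "rho \<le> N" "psi \<le> N - rho" "a \<in> {1..N}" "b \<in> {1..N}" "a \<noteq> b"
  shows "measure (receiver_pmf N rho psi) {x. a \<in> snd x \<and> b \<in> fst x}
     = real rho * real psi / (real N * (real N - 1))"
proof -
  let ?HS = "{H. H \<subseteq> {1..N} \<and> card H = rho}"
  have N0: "N > 1" using assms by auto
  have "(\<Sum>H\<in>?HS. measure (pmf_of_set {W. W \<subseteq> {1..N} - H \<and> card W = psi}) {W. (H, W) \<in> {x. a \<in> snd x \<and> b \<in> fst x}})
      = (\<Sum>H\<in>?HS. (if b \<in> H \<and> a \<notin> H then real psi / real (N - rho) else 0))"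
  proof (rule sum.cong[OF refl])
    fix H assume H: "H \<in> ?HS"
    show "measure (pmf_of_set {W. W \<subseteq> {1..N} - H \<and> card W = psi}) {W. (H, W) \<in> {x. a \<in> snd x \<and> b \<in> fst x}}
      = (if b \<in> H \<and> a \<notin> H then real psi / real (N - rho) else 0)"
    proof (cases "b \<in> H")
      case True
      then show ?thesis using inner_mem[of H N rho psi a] H assms by simp
    next
      case False
      then show ?thesis by simp
    qed
  qed
  also have "\<dots> = real psi / real (N - rho) * real (card {H \<in> ?HS. b \<in> H \<and> a \<notin> H})"
    by (simp add: sum.If_cases Int_def)
  also have "{H \<in> ?HS. b \<in> H \<and> a \<notin> H} = {H. H \<subseteq> {1..N} - {a} \<and> card H = rho \<and> b \<in> H}" by auto
  finally have S: "(\<Sum>H\<in>?HS. measure (pmf_of_set {W. W \<subseteq> {1..N} - H \<and> card W = psi}) {W. (H, W) \<in> {x. a \<in> snd x \<and> b \<in> fst x}})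
      = real psi / real (N - rho) * real (card {H. H \<subseteq> {1..N} - {a} \<and> card H = rho \<and> b \<in> H})" .
  have cHS: "card ?HS = N choose rho" by (simp add: n_subsets)
  have pos: "(N choose rho) > 0" using assms by simp
  show ?thesis
  proof (cases "rho = N \<or> rho = 0")
    case True
    show ?thesis
    proof (cases "rho = N")
      case True
      then have "psi = 0" using assms by simp
      then show ?thesis using recv_measure[OF assms(1,2), of "{x. a \<in> snd x \<and> b \<in> fst x}"] S by simp
    next
      case False
      then have r0: "rho = 0" using True by simp
      have E: "{H. H \<subseteq> {1..N} - {a} \<and> card H = rho \<and> b \<in> H} = {}"
      proof (rule equals0I)
        fix H assume "H \<in> {H. H \<subseteq> {1..N} - {a} \<and> card H = rho \<and> b \<in> H}"
        then have "finite H" "card H = 0" "b \<in> H" using r0 finite_subset by auto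
        then show False by simp
      qed
      show ?thesis using recv_measure[OF assms(1,2), of "{x. a \<in> snd x \<and> b \<in> fst x}"] S r0
        unfolding E by simp
    qed
  next
    case False
    have c: "card {H. H \<subseteq> {1..N} - {a} \<and> card H = rho \<and> b \<in> H} = (N - 2) choose (rho - 1)"
    proof -
      have e: "card ({1..N} - {a}) - 1 = N - 2" using assms(3) by simp
      have "card {H. H \<subseteq> {1..N} - {a} \<and> card H = rho \<and> b \<in> H} = (card ({1..N} - {a}) - 1) choose (rho - 1)"
        by (rule cnt_mem) (use assms False in auto)
      then show ?thesis by (simp only: e)
    qed
    have e1: "rho * (N choose rho) = N * ((N - 1) choose (rho - 1))"
      using False times_binomial_minus1_eq by simp
    have e2: "(N - 1 - (rho - 1)) * ((N - 1) choose (rho - 1)) = (N - 1) * ((N - 1 - 1) choose (rho - 1))"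
      by (rule binomial_absorb_comp)
    have e3: "N - 1 - (rho - 1) = N - rho" "N - 1 - 1 = N - 2" using False assms by auto
    have e2': "(N - rho) * ((N - 1) choose (rho - 1)) = (N - 1) * ((N - 2) choose (rho - 1))"
      using e2 by (simp only: e3)
    have e: "rho * (N - rho) * (N choose rho) = N * (N - 1) * ((N - 2) choose (rho - 1))"
    proof -
      have "rho * (N - rho) * (N choose rho) = (N - rho) * (rho * (N choose rho))" by (simp only: mult_ac)
      also have "\<dots> = (N - rho) * (N * ((N - 1) choose (rho - 1)))" by (simp only: e1)
      also have "\<dots> = N * ((N - rho) * ((N - 1) choose (rho - 1)))" by (simp only: mult_ac)
      also have "\<dots> = N * ((N - 1) * ((N - 2) choose (rho - 1)))" by (simp only: e2')
      finally show ?thesis by (simp only: mult_ac)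
    qed
    have hh: "real (rho * (N - rho) * (N choose rho)) = real (N * (N - 1) * ((N - 2) choose (rho - 1)))"
      using e by (simp only:)
    have e': "real ((N - 2) choose (rho - 1)) * (real N * (real N - 1)) = real rho * ((real N - real rho) * real (N choose rho))"
      using hh assms(1) N0 by (simp add: of_nat_diff mult_ac)
    have np: "real (N - rho) > 0" using False assms by simp
    have "measure (receiver_pmf N rho psi) {x. a \<in> snd x \<and> b \<in> fst x}
       = real psi / real (N - rho) * real ((N - 2) choose (rho - 1)) / real (N choose rho)"
      using recv_measure[OF assms(1,2), of "{x. a \<in> snd x \<and> b \<in> fst x}"] S cHS c by simp
    also have "\<dots> = real rho * real psi / (real N * (real N - 1))"
      using np pos N0 e' by (simp add: divide_simps)
    finally show ?thesis .
  qed
qed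




lemma cond_Pi:
  assumes A: "finite A" "i \<in> A" and ne: "set_pmf (p i) \<inter> X \<noteq> {}"
  shows "cond_pmf (Pi_pmf A d p) {c. c i \<in> X} = Pi_pmf A d (p(i := cond_pmf (p i) X))"
proof -
  have comp: "map_pmf (\<lambda>f. f i) (Pi_pmf A d p) = p i" by (subst Pi_pmf_component[OF A(1)]) (simp add: A(2))
  have mA: "measure (Pi_pmf A d p) {c. c i \<in> X} = measure (p i) X"
  proof -
    have "measure (p i) X = measure (map_pmf (\<lambda>f. f i) (Pi_pmf A d p)) X" using comp by simp
    also have "\<dots> = measure (Pi_pmf A d p) {c. c i \<in> X}" by (simp add: vimage_def)
    finally show ?thesis by simp
  qed
  have ne2: "set_pmf (Pi_pmf A d p) \<inter> {c. c i \<in> X} \<noteq> {}"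
  proof -
    obtain x where x: "x \<in> set_pmf (p i)" "x \<in> X" using ne by blast
    have "set_pmf (p i) = (\<lambda>f. f i) ` set_pmf (Pi_pmf A d p)" using comp[symmetric] by simp
    with x obtain c where "c \<in> set_pmf (Pi_pmf A d p)" "c i = x" by auto
    then show ?thesis using x by auto
  qed
  have m0: "measure (p i) X > 0"
  proof -
    obtain x where "x \<in> set_pmf (p i)" "x \<in> X" using ne by blast
    then show ?thesis by (rule measure_pmf_posI)
  qed
  show ?thesis
  proof (rule pmf_eqI)
    fix f
    let ?p' = "p(i := cond_pmf (p i) X)"
    have pr1: "(\<Prod>x\<in>A. pmf (p x) (f x)) = pmf (p i) (f i) * (\<Prod>x\<in>A - {i}. pmf (p x) (f x))"
      using A by (simp add: prod.remove)
    have pr2: "(\<Prod>x\<in>A. pmf (?p' x) (f x)) = pmf (cond_pmf (p i) X) (f i) * (\<Prod>x\<in>A - {i}. pmf (p x) (f x))"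
      using A by (simp add: prod.remove)
    show "pmf (cond_pmf (Pi_pmf A d p) {c. c i \<in> X}) f = pmf (Pi_pmf A d ?p') f"
      using ne ne2 pr1 pr2 mA m0 A
      by (simp add: pmf_cond pmf_Pi) blast
  qed
qed

lemma Pi_pair:
  assumes A: "finite A" "i \<in> A" "k \<in> A" "i \<noteq> k"
  shows "map_pmf (\<lambda>c. (c i, c k)) (Pi_pmf A d p) = pair_pmf (p i) (p k)"
proof -
  have AA: "A = insert i (A - {i})" using A by auto
  have "map_pmf (\<lambda>c. (c i, c k)) (Pi_pmf A d p)
      = map_pmf (\<lambda>c. (c i, c k)) (map_pmf (\<lambda>(y,f). f(i:=y)) (pair_pmf (p i) (Pi_pmf (A - {i}) d p)))"
    by (subst AA, subst Pi_pmf_insert) (use A in auto)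
  also have "\<dots> = map_pmf (\<lambda>(a, b). (id a, (\<lambda>f. f k) b)) (pair_pmf (p i) (Pi_pmf (A - {i}) d p))"
    unfolding pmf.map_comp using A(4) by (intro pmf.map_cong refl) auto
  also have "\<dots> = pair_pmf (map_pmf id (p i)) (map_pmf (\<lambda>f. f k) (Pi_pmf (A - {i}) d p))"
    by (rule map_pair)
  also have "\<dots> = pair_pmf (p i) (p k)"
    using Pi_pmf_component[of "A - {i}" k d p] A by simp
  finally show ?thesis .
qed

lemma prod_meas: "measure (pair_pmf M N) (A \<times> B) = measure M A * measure N B"
proof -
  have "measure (pair_pmf M N) (A \<times> B) = measure (pair_pmf M N) ((A \<times> B) \<inter> set_pmf (pair_pmf M N))"
    by (rule measure_Int_set_pmf[symmetric])
  also have "(A \<times> B) \<inter> set_pmf (pair_pmf M N) = (A \<inter> set_pmf M) \<times> (B \<inter> set_pmf N)" by auto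
  also have "measure (pair_pmf M N) \<dots> = measure M (A \<inter> set_pmf M) * measure N (B \<inter> set_pmf N)"
    by (rule measure_pmf_prob_product) (auto intro: countable_subset[OF _ countable_set_pmf])
  also have "\<dots> = measure M A * measure N B" by (simp add: measure_Int_set_pmf)
  finally show ?thesis .
qed

lemma recv_support:
  assumes "rho \<le> N" "psi \<le> N - rho" "x \<in> set_pmf (receiver_pmf N rho psi)"
  shows "snd x \<subseteq> {1..N} - fst x"
proof -
  let ?HS = "{H. H \<subseteq> {1..N} \<and> card H = rho}"
  let ?WS = "\<lambda>H. {W. W \<subseteq> {1..N} - H \<and> card W = psi}"
  have HS: "?HS \<noteq> {}" "finite ?HS" using subsets_ne[of "{1..N}" rho] assms by auto
  have WS: "?WS H \<noteq> {}" "finite (?WS H)" if "H \<in> ?HS" for H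
  proof -
    have "card ({1..N} - H) = N - rho" using that by (auto simp: card_Diff_subset finite_subset)
    then show "?WS H \<noteq> {}" "finite (?WS H)" using subsets_ne[of "{1..N} - H" psi] assms by auto
  qed
  from assms(3) obtain H W where "H \<in> ?HS" "W \<in> set_pmf (pmf_of_set (?WS H))" "x = (H, W)"
    unfolding receiver_pmf_def using HS by auto
  then show ?thesis using WS by auto
qed

lemma cond_meas:
  assumes "set_pmf p \<inter> s \<noteq> {}"
  shows "measure (cond_pmf p s) B = measure p (s \<inter> B) / measure p s"
proof -
  have "emeasure (measure_pmf p) s \<noteq> 0" by (rule emeasure_measure_pmf_not_zero[OF assms])
  then show ?thesis using cond_pmf.rep_eq[OF assms] measure_uniform_measure[of "measure_pmf p" s B]
    by (simp add: measure_pmf.emeasure_eq_measure)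
qed




lemma deg_decomp:
  fixes c :: config
  assumes "i \<in> {1..M}" "j \<in> snd (c i)" "\<And>k. k \<in> {1..M} \<Longrightarrow> snd (c k) \<subseteq> {1..N} - fst (c k)"
  shows "real (primary_degree M c (i, j)) = (\<Sum>k\<in>{1..M}-{i}. \<Sum>l\<in>{1..N}.
      indicator {c. l \<in> snd (c k) \<and> (l = j \<or> (j \<in> fst (c k) \<and> l \<in> fst (c i)))} c)"
proof -
  define T where "T k = {l \<in> snd (c k). l = j \<or> (j \<in> fst (c k) \<and> l \<in> fst (c i))}" for k
  have hj: "j \<notin> fst (c i)" using assms(1,2) assms(3)[of i] by auto
  have S: "{u \<in> idnc_vertices M c. idnc_adj c (i, j) u} = (\<Union>k\<in>{1..M}-{i}. {k} \<times> T k)"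
  proof (intro equalityI subsetI)
    fix u assume u: "u \<in> {u \<in> idnc_vertices M c. idnc_adj c (i, j) u}"
    obtain k l where kl: "u = (k, l)" by (cases u)
    have k: "k \<in> {1..M}" "l \<in> snd (c k)" "(i, j) \<noteq> (k, l)" "l = j \<or> (j \<in> fst (c k) \<and> l \<in> fst (c i))"
      using u kl by (auto simp: idnc_vertices_def idnc_adj_def Has_def Wants_def)
    have "k \<noteq> i" using k hj by auto
    then show "u \<in> (\<Union>k\<in>{1..M}-{i}. {k} \<times> T k)" using k kl by (auto simp: T_def)
  next
    fix u assume "u \<in> (\<Union>k\<in>{1..M}-{i}. {k} \<times> T k)"
    then obtain k where k: "k \<in> {1..M}-{i}" "u \<in> {k} \<times> T k" by blast
    then obtain l where "u = (k, l)" "k \<in> {1..M}" "k \<noteq> i" "l \<in> T k" by blast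
    then show "u \<in> {u \<in> idnc_vertices M c. idnc_adj c (i, j) u}"
      by (auto simp: T_def idnc_vertices_def idnc_adj_def Has_def Wants_def)
  qed
  have fT: "finite (T k)" if "k \<in> {1..M}" for k
  proof (rule finite_subset[of _ "{1..N}"])
    show "T k \<subseteq> {1..N}" using assms(3)[OF that] by (auto simp: T_def)
  qed simp
  have "primary_degree M c (i, j) = card (\<Union>k\<in>{1..M}-{i}. {k} \<times> T k)"
    unfolding primary_degree_def S ..
  also have "\<dots> = (\<Sum>k\<in>{1..M}-{i}. card ({k} \<times> T k))"
    by (rule card_UN_disjoint) (use fT in auto)
  also have "\<dots> = (\<Sum>k\<in>{1..M}-{i}. card (T k))"
    by (simp add: card_cartesian_product_singleton)
  finally have 1: "real (primary_degree M c (i, j)) = (\<Sum>k\<in>{1..M}-{i}. real (card (T k)))" by simp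
  have 2: "real (card (T k)) = (\<Sum>l\<in>{1..N}.
      indicator {c. l \<in> snd (c k) \<and> (l = j \<or> (j \<in> fst (c k) \<and> l \<in> fst (c i)))} c)"
    if "k \<in> {1..M}-{i}" for k
  proof -
    have "T k = {1..N} \<inter> T k" using assms(3)[of k] that by (auto simp: T_def)
    then have "real (card (T k)) = (\<Sum>l\<in>{1..N} \<inter> T k. (1::real))" by simp
    also have "\<dots> = (\<Sum>l\<in>{1..N}. if l \<in> T k then 1 else 0)" by (rule sum.inter_restrict) simp
    also have "\<dots> = (\<Sum>l\<in>{1..N}.
      indicator {c. l \<in> snd (c k) \<and> (l = j \<or> (j \<in> fst (c k) \<and> l \<in> fst (c i)))} c)"
      by (rule sum.cong) (auto simp: T_def indicator_def)
    finally show ?thesis .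
  qed
  show ?thesis using 1 2 by simp
qed




theorem theorem6:
  fixes N M :: nat and rho psi :: "nat \<Rightarrow> nat" and i j :: nat
  assumes "N \<ge> 2"
    and "\<And>k. k \<in> {1..M} \<Longrightarrow> rho k \<le> N"
    and "\<And>k. k \<in> {1..M} \<Longrightarrow> psi k \<le> N - rho k"
    and "i \<in> {1..M}" and "psi i \<ge> 1"
    and "j \<in> {1..N}"
  shows "expected_primary_degree N M rho psi i j =
    (\<Sum>k\<in>{1..M} - {i}. real (psi k) / real N *
       (1 + real (rho k) * real (rho i) / (real N - 1)))"
proof -
  define p where "p k = receiver_pmf N (rho k) (psi k)" for k
  define X where "X = {x::nat set \<times> nat set. j \<in> snd x}"
  define q where "q = cond_pmf (p i) X"
  define Q where "Q = Pi_pmf {1..M} ({}, {}) (p(i := q))"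
  define E where "E k l = {c::config. l \<in> snd (c k) \<and> (l = j \<or> (j \<in> fst (c k) \<and> l \<in> fst (c i)))}" for k l
  have N1: "real N - 1 > 0" "real N > 0" using assms(1) by auto
  have mX: "measure (p i) X = real (psi i) / real N"
    unfolding p_def X_def by (rule R1) (use assms in auto)
  have neX: "set_pmf (p i) \<inter> X \<noteq> {}"
  proof
    assume "set_pmf (p i) \<inter> X = {}"
    then have "measure (p i) X = 0" by (simp add: measure_pmf_zero_iff)
    then show False using mX N1 assms(5) by simp
  qed
  have condeq: "cond_pmf (config_pmf N M rho psi) {c. j \<in> Wants c i} = Q"
  proof -
    have "config_pmf N M rho psi = Pi_pmf {1..M} ({}, {}) p" by (simp add: config_pmf_def p_def[abs_def])
    moreover have "{c. j \<in> Wants c i} = {c. c i \<in> X}" by (simp add: Wants_def X_def)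
    ultimately show ?thesis unfolding Q_def q_def using cond_Pi[of "{1..M}" i p X "({}, {})"] assms(4) neX by simp
  qed
  have supp: "snd (c k) \<subseteq> {1..N} - fst (c k)" "j \<in> snd (c i)"
    if "c \<in> set_pmf Q" "k \<in> {1..M}" for c k
  proof -
    have c: "\<And>k. k \<in> {1..M} \<Longrightarrow> c k \<in> set_pmf ((p(i := q)) k)"
      using that(1) unfolding Q_def by (simp add: set_Pi_pmf PiE_dflt_def)
    have ci: "c i \<in> set_pmf (p i) \<inter> X" using c[OF assms(4)] neX by (simp add: q_def)
    then show "j \<in> snd (c i)" by (simp add: X_def)
    have "c k \<in> set_pmf (p k)" using c[OF that(2)] ci by (cases "k = i") auto
    then show "snd (c k) \<subseteq> {1..N} - fst (c k)"
      unfolding p_def by (rule recv_support[rotated 2]) (use assms that in auto)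
  qed
  have "expected_primary_degree N M rho psi i j = measure_pmf.expectation Q (\<lambda>c. real (primary_degree M c (i, j)))"
    unfolding expected_primary_degree_def condeq ..
  also have "\<dots> = measure_pmf.expectation Q (\<lambda>c. \<Sum>k\<in>{1..M}-{i}. \<Sum>l\<in>{1..N}. indicator (E k l) c)"
  proof (rule integral_cong_AE)
    show "AE c in measure_pmf Q. real (primary_degree M c (i, j)) = (\<Sum>k\<in>{1..M}-{i}. \<Sum>l\<in>{1..N}. indicator (E k l) c)"
      unfolding AE_measure_pmf_iff E_def
    proof
      fix c assume c: "c \<in> set_pmf Q"
      show "real (primary_degree M c (i, j)) = (\<Sum>k\<in>{1..M}-{i}. \<Sum>l\<in>{1..N}.
          indicator {c. l \<in> snd (c k) \<and> (l = j \<or> (j \<in> fst (c k) \<and> l \<in> fst (c i)))} c)"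
        by (rule deg_decomp[OF assms(4)]) (use supp[OF c] assms(4) in auto)
    qed
  qed simp_all
  also have "\<dots> = (\<Sum>k\<in>{1..M}-{i}. \<Sum>l\<in>{1..N}. measure Q (E k l))"
    by (simp add: integral_sum measure_pmf.emeasure_eq_measure)
  also have "\<dots> = (\<Sum>k\<in>{1..M} - {i}. real (psi k) / real N *
       (1 + real (rho k) * real (rho i) / (real N - 1)))"
  proof (rule sum.cong[OF refl])
    fix k assume k: "k \<in> {1..M} - {i}"
    have pair: "map_pmf (\<lambda>c. (c i, c k)) Q = pair_pmf q (p k)"
      unfolding Q_def using Pi_pair[of "{1..M}" i k "({}, {})" "p(i := q)"] assms(4) k by auto
    have mE: "measure Q (E k l) = measure (pair_pmf q (p k))
        {(x, y). l \<in> snd y \<and> (l = j \<or> (j \<in> fst y \<and> l \<in> fst x))}" for l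
    proof -
      have "measure (pair_pmf q (p k)) {(x, y). l \<in> snd y \<and> (l = j \<or> (j \<in> fst y \<and> l \<in> fst x))}
          = measure (map_pmf (\<lambda>c. (c i, c k)) Q) {(x, y). l \<in> snd y \<and> (l = j \<or> (j \<in> fst y \<and> l \<in> fst x))}"
        using pair by simp
      also have "\<dots> = measure Q (E k l)" by (simp add: E_def vimage_def)
      finally show ?thesis by simp
    qed
    have kk: "rho k \<le> N" "psi k \<le> N - rho k" "rho i \<le> N" "psi i \<le> N - rho i"
      using assms k by auto
    have tj: "measure Q (E k j) = real (psi k) / real N"
    proof -
      have "measure Q (E k j) = measure (pair_pmf q (p k)) {(x, y). j \<in> snd y \<and> (j = j \<or> (j \<in> fst y \<and> j \<in> fst x))}"
        by (rule mE)
      also have "{(x, y). j \<in> snd y \<and> (j = j \<or> (j \<in> fst y \<and> j \<in> fst x))} = UNIV \<times> {y. j \<in> snd y}" by auto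
      also have "measure (pair_pmf q (p k)) \<dots> = measure q UNIV * measure (p k) {y. j \<in> snd y}" by (rule prod_meas)
      also have "\<dots> = real (psi k) / real N" using R1[OF kk(1,2) assms(6)] by (simp add: p_def)
      finally show ?thesis .
    qed
    have tl: "measure Q (E k l) = real (rho i) / (real N - 1) * (real (rho k) * real (psi k) / (real N * (real N - 1)))"
      if l: "l \<in> {1..N} - {j}" for l
    proof -
      have eq: "{(x, y). l \<in> snd y \<and> (l = j \<or> (j \<in> fst y \<and> l \<in> fst x))} = {x. l \<in> fst x} \<times> {y. l \<in> snd y \<and> j \<in> fst y}"
        using l by auto
      have 1: "measure Q (E k l) = measure q {x. l \<in> fst x} * measure (p k) {y. l \<in> snd y \<and> j \<in> fst y}"
        unfolding mE[of l] eq by (rule prod_meas)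
      have 2: "measure (p k) {y. l \<in> snd y \<and> j \<in> fst y} = real (rho k) * real (psi k) / (real N * (real N - 1))"
        unfolding p_def by (rule R2) (use kk l assms(6) in auto)
      have "measure q {x. l \<in> fst x} = measure (p i) (X \<inter> {x. l \<in> fst x}) / measure (p i) X"
        unfolding q_def by (rule cond_meas[OF neX])
      also have "X \<inter> {x. l \<in> fst x} = {x. j \<in> snd x \<and> l \<in> fst x}" by (auto simp: X_def)
      also have "measure (p i) \<dots> = real (rho i) * real (psi i) / (real N * (real N - 1))"
        unfolding p_def by (rule R2) (use kk l assms(6) in auto)
      finally have 3: "measure q {x. l \<in> fst x} = real (rho i) * real (psi i) / (real N * (real N - 1)) / (real (psi i) / real N)"
        unfolding mX .
      have ps: "real (psi i) > 0" using assms(5) by simp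
      have 4: "real (rho i) * real (psi i) / (real N * (real N - 1)) / (real (psi i) / real N) = real (rho i) / (real N - 1)"
        using ps N1 by (simp add: divide_simps)
      have 5: "measure q {x. l \<in> fst x} = real (rho i) / (real N - 1)" using 3 4 by (rule trans)
      show ?thesis unfolding 1 2 5 by (rule refl)
    qed
    have "(\<Sum>l\<in>{1..N}. measure Q (E k l)) = measure Q (E k j) + (\<Sum>l\<in>{1..N} - {j}. measure Q (E k l))"
      using assms(6) by (simp add: sum.remove)
    also have "(\<Sum>l\<in>{1..N} - {j}. measure Q (E k l)) = (\<Sum>l\<in>{1..N} - {j}.
        real (rho i) / (real N - 1) * (real (rho k) * real (psi k) / (real N * (real N - 1))))"
      by (rule sum.cong[OF refl]) (rule tl)
    also have "\<dots> = (real N - 1) * (real (rho i) / (real N - 1) * (real (rho k) * real (psi k) / (real N * (real N - 1))))"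
      using assms(6) by (simp add: of_nat_diff)
    also have "\<dots> = real (rho i) * (real (rho k) * real (psi k) / (real N * (real N - 1)))"
      using N1 by simp
    also have "measure Q (E k j) = real (psi k) / real N" by (rule tj)
    also have "real (psi k) / real N + real (rho i) * (real (rho k) * real (psi k) / (real N * (real N - 1)))
       = real (psi k) / real N * (1 + real (rho k) * real (rho i) / (real N - 1))"
      using N1 by (simp add: field_simps)
    finally show "(\<Sum>l\<in>{1..N}. measure Q (E k l)) = real (psi k) / real N *
       (1 + real (rho k) * real (rho i) / (real N - 1))" .
  qed
  finally show ?thesis .
qed


end
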